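(* Let $\alpha,\beta,\gamma\in\Bbbk^n$. (1) Let $\lambda\in(\Bbbk^\times)^n$ and set $\alpha'_i=\lambda_i\lambda_{i-1}^{-1}\alpha_i$, $\beta'_i=\lambda_{i+1}\lambda_{i-1}^{-1}\beta_i$, $\gamma'_i=\lambda_{i-1}^{-1}\gamma_i$ for all $i$. Then the linear map $\phi_\lambda$ with $\phi_\lambda(e_i)=e_i$, $\phi_\lambda(u_i)=\lambda_iu_i$, $\phi_\lambda(d_i)=d_i$ extends to an isomorphism $\mathcal H(\alpha,\beta,\gamma)\to\mathcal H(\alpha',\beta',\gamma')$. (2) Set $\alpha'_i=\alpha_{i-1}$, $\beta'_i=\beta_{i-1}$, $\gamma'_i=\gamma_{i-1}$. Then the linear map $\psi$ with $\psi(e_i)=e_{i+1}$, $\psi(u_i)=u_{i+1}$, $\psi(d_i)=d_{i+1}$ extends to an isomorphism $\mathcal H(\alpha,\beta,\gamma)\to\mathcal H(\alpha',\beta',\gamma')$. (3) Suppose $\beta_i\neq0$ for all $i$, and set $\alpha'_i=-\beta_{n-i-1}^{-1}\alpha_{n-i-1}$, $\beta'_i=\beta_{n-i-1}^{-1}$, $\gamma'_i=-\beta_{n-i-1}^{-1}\gamma_{n-i-1}$. Then the linear map $\pi$ with $\pi(e_i)=e_{n-i}$, $\pi(u_i)=d_{n-i-1}$, $\pi(d_i)=u_{n-i-1}$ extends to an isomorphism $\mathcal H(\alpha,\beta,\gamma)\to\mathcal H(\alpha',\beta',\gamma')$.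
   Context: $\Bbbk$ is an algebraically closed field of characteristic zero. Fix $n\ge1$; indices mod $n$, $Q_0=\{0,\dots,n-1\}$. $Q$ is the quiver with vertices $Q_0$ and arrows $u_i:i\to i+1$, $d_i:i+1\to i$; paths are written left to right, $e_i$ is the trivial path at $i$. $\mathcal H(\alpha,\beta,\gamma)$ is $\Bbbk Q$ modulo the relations $d_{i-1}u_{i-1}u_i=\alpha_iu_id_iu_i+\beta_iu_iu_{i+1}d_{i+1}+\gamma_iu_i$ and $d_id_{i-1}u_{i-1}=\alpha_id_iu_id_i+\beta_iu_{i+1}d_{i+1}d_i+\gamma_id_i$ for all $i\in Q_0$. *)

theory Defs
  imports "HOL-Algebra.QuotRing" "HOL-Computational_Algebra.Polynomial"
begin

text \<open>Vertices are 0,...,n-1; indices are read mod n.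
  Arrows: U i = u_i : i -> i+1, D i = d_i : i+1 -> i (for i < n).\<close>

definition nx :: "nat \<Rightarrow> nat \<Rightarrow> nat" where "nx n i = (i + 1) mod n"
definition pr :: "nat \<Rightarrow> nat \<Rightarrow> nat" where "pr n i = (i + n - 1) mod n"

datatype arr = U nat | D nat

fun asrc :: "nat \<Rightarrow> arr \<Rightarrow> nat" where
  "asrc n (U i) = i"
| "asrc n (D i) = nx n i"

fun atgt :: "nat \<Rightarrow> arr \<Rightarrow> nat" where
  "atgt n (U i) = nx n i"
| "atgt n (D i) = i"

fun aidx :: "arr \<Rightarrow> nat" where
  "aidx (U i) = i"
| "aidx (D i) = i"

text \<open>Paths: trivial paths e_i, or nonempty composable lists of arrows,
  written left to right.\<close>
datatype path = Triv nat | Path "arr list"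

fun composable :: "nat \<Rightarrow> arr list \<Rightarrow> bool" where
  "composable n (a # b # as) = (atgt n a = asrc n b \<and> composable n (b # as))"
| "composable n _ = True"

fun valid_path :: "nat \<Rightarrow> path \<Rightarrow> bool" where
  "valid_path n (Triv i) = (i < n)"
| "valid_path n (Path as) = (as \<noteq> [] \<and> (\<forall>a\<in>set as. aidx a < n) \<and> composable n as)"

fun psrc :: "nat \<Rightarrow> path \<Rightarrow> nat" where
  "psrc n (Triv i) = i"
| "psrc n (Path as) = asrc n (hd as)"

fun ptgt :: "nat \<Rightarrow> path \<Rightarrow> nat" where
  "ptgt n (Triv i) = i"
| "ptgt n (Path as) = atgt n (last as)"

text \<open>Concatenation of paths (left to right); None means the product is zero.\<close>
fun pcat :: "path \<Rightarrow> path \<Rightarrow> path" where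
  "pcat (Triv i) q = q"
| "pcat p (Triv j) = p"
| "pcat (Path as) (Path bs) = Path (as @ bs)"

definition pcomp :: "nat \<Rightarrow> path \<Rightarrow> path \<Rightarrow> path option" where
  "pcomp n p q = (if ptgt n p = psrc n q then Some (pcat p q) else None)"

definition kQ_carrier :: "nat \<Rightarrow> (path \<Rightarrow> 'a::field) set" where
  "kQ_carrier n = {f. finite {p. f p \<noteq> 0} \<and> (\<forall>p. f p \<noteq> 0 \<longrightarrow> valid_path n p)}"

definition kQ_mult :: "nat \<Rightarrow> (path \<Rightarrow> 'a::field) \<Rightarrow> (path \<Rightarrow> 'a) \<Rightarrow> (path \<Rightarrow> 'a)" where
  "kQ_mult n f g = (\<lambda>p. \<Sum>(q, r) \<in> {(q, r). f q \<noteq> 0 \<and> g r \<noteq> 0 \<and> pcomp n q r = Some p}.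
                        f q * g r)"

definition kQ_one :: "nat \<Rightarrow> path \<Rightarrow> 'a::field" where
  "kQ_one n = (\<lambda>p. case p of Triv i \<Rightarrow> (if i < n then 1 else 0) | Path _ \<Rightarrow> 0)"

definition kQ :: "nat \<Rightarrow> (path \<Rightarrow> 'a::field) ring" where
  "kQ n = \<lparr>carrier = kQ_carrier n, monoid.mult = kQ_mult n, monoid.one = kQ_one n,
           ring.zero = (\<lambda>p. 0), ring.add = (\<lambda>f g p. f p + g p)\<rparr>"

definition bas :: "path \<Rightarrow> path \<Rightarrow> 'a::field" where
  "bas p = (\<lambda>q. if q = p then 1 else 0)"

definition sc :: "'a::field \<Rightarrow> (path \<Rightarrow> 'a) \<Rightarrow> path \<Rightarrow> 'a" where
  "sc c f = (\<lambda>p. c * f p)"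

definition ev :: "nat \<Rightarrow> path \<Rightarrow> 'a::field" where "ev i = bas (Triv i)"
definition uv :: "nat \<Rightarrow> path \<Rightarrow> 'a::field" where "uv i = bas (Path [U i])"
definition dv :: "nat \<Rightarrow> path \<Rightarrow> 'a::field" where "dv i = bas (Path [D i])"

text \<open>A product of composable arrows in kQ is the basis element of the concatenated path.\<close>
definition rel1 :: "nat \<Rightarrow> (nat \<Rightarrow> 'a::field) \<Rightarrow> (nat \<Rightarrow> 'a) \<Rightarrow> (nat \<Rightarrow> 'a) \<Rightarrow> nat \<Rightarrow> path \<Rightarrow> 'a" where
  "rel1 n \<alpha> \<beta> \<gamma> i = (\<lambda>p.
      bas (Path [D (pr n i), U (pr n i), U i]) p
      - \<alpha> i * bas (Path [U i, D i, U i]) p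
      - \<beta> i * bas (Path [U i, U (nx n i), D (nx n i)]) p
      - \<gamma> i * bas (Path [U i]) p)"

definition rel2 :: "nat \<Rightarrow> (nat \<Rightarrow> 'a::field) \<Rightarrow> (nat \<Rightarrow> 'a) \<Rightarrow> (nat \<Rightarrow> 'a) \<Rightarrow> nat \<Rightarrow> path \<Rightarrow> 'a" where
  "rel2 n \<alpha> \<beta> \<gamma> i = (\<lambda>p.
      bas (Path [D i, D (pr n i), U (pr n i)]) p
      - \<alpha> i * bas (Path [D i, U i, D i]) p
      - \<beta> i * bas (Path [U (nx n i), D (nx n i), D i]) p
      - \<gamma> i * bas (Path [D i]) p)"

definition rels :: "nat \<Rightarrow> (nat \<Rightarrow> 'a::field) \<Rightarrow> (nat \<Rightarrow> 'a) \<Rightarrow> (nat \<Rightarrow> 'a) \<Rightarrow> (path \<Rightarrow> 'a) set" where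
  "rels n \<alpha> \<beta> \<gamma> = {rel1 n \<alpha> \<beta> \<gamma> i | i. i < n} \<union> {rel2 n \<alpha> \<beta> \<gamma> i | i. i < n}"

definition Irel :: "nat \<Rightarrow> (nat \<Rightarrow> 'a::field) \<Rightarrow> (nat \<Rightarrow> 'a) \<Rightarrow> (nat \<Rightarrow> 'a) \<Rightarrow> (path \<Rightarrow> 'a) set" where
  "Irel n \<alpha> \<beta> \<gamma> = genideal (kQ n) (rels n \<alpha> \<beta> \<gamma>)"

definition HH :: "nat \<Rightarrow> (nat \<Rightarrow> 'a::field) \<Rightarrow> (nat \<Rightarrow> 'a) \<Rightarrow> (nat \<Rightarrow> 'a) \<Rightarrow> (path \<Rightarrow> 'a) set ring" where
  "HH n \<alpha> \<beta> \<gamma> = kQ n Quot Irel n \<alpha> \<beta> \<gamma>"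

definition cls :: "nat \<Rightarrow> (nat \<Rightarrow> 'a::field) \<Rightarrow> (nat \<Rightarrow> 'a) \<Rightarrow> (nat \<Rightarrow> 'a) \<Rightarrow> (path \<Rightarrow> 'a) \<Rightarrow> (path \<Rightarrow> 'a) set" where
  "cls n \<alpha> \<beta> \<gamma> x = Irel n \<alpha> \<beta> \<gamma> +>\<^bsub>kQ n\<^esub> x"

text \<open>The assignment e_i |-> E i, u_i |-> Uu i, d_i |-> Dd i (elements of kQ, taken
  in H(alpha',beta',gamma')) extends to an isomorphism of k-algebras
  H(alpha,beta,gamma) -> H(alpha',beta',gamma'): a ring isomorphism that is
  k-linear (i.e. compatible with the structure maps c |-> c 1) and takes the
  prescribed values on the generators.\<close>
definition extends_to_iso ::
  "nat \<Rightarrow> (nat \<Rightarrow> 'a::field) \<Rightarrow> (nat \<Rightarrow> 'a) \<Rightarrow> (nat \<Rightarrow> 'a) \<Rightarrow>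
   (nat \<Rightarrow> 'a) \<Rightarrow> (nat \<Rightarrow> 'a) \<Rightarrow> (nat \<Rightarrow> 'a) \<Rightarrow>
   (nat \<Rightarrow> path \<Rightarrow> 'a) \<Rightarrow> (nat \<Rightarrow> path \<Rightarrow> 'a) \<Rightarrow> (nat \<Rightarrow> path \<Rightarrow> 'a) \<Rightarrow> bool" where
  "extends_to_iso n \<alpha> \<beta> \<gamma> \<alpha>' \<beta>' \<gamma>' E Uu Dd \<longleftrightarrow>
     (\<exists>h. h \<in> ring_iso (HH n \<alpha> \<beta> \<gamma>) (HH n \<alpha>' \<beta>' \<gamma>') \<and>
          (\<forall>c. h (cls n \<alpha> \<beta> \<gamma> (sc c (kQ_one n))) = cls n \<alpha>' \<beta>' \<gamma>' (sc c (kQ_one n))) \<and>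
          (\<forall>i<n. h (cls n \<alpha> \<beta> \<gamma> (ev i)) = cls n \<alpha>' \<beta>' \<gamma>' (E i)) \<and>
          (\<forall>i<n. h (cls n \<alpha> \<beta> \<gamma> (uv i)) = cls n \<alpha>' \<beta>' \<gamma>' (Uu i)) \<and>
          (\<forall>i<n. h (cls n \<alpha> \<beta> \<gamma> (dv i)) = cls n \<alpha>' \<beta>' \<gamma>' (Dd i)))"

end

theory Submission
  imports Defs
begin


lemma kQ_simps[simp]:
  "carrier (kQ n) = kQ_carrier n"
  "x \<otimes>\<^bsub>kQ n\<^esub> y = kQ_mult n x y"
  "\<one>\<^bsub>kQ n\<^esub> = kQ_one n"
  "\<zero>\<^bsub>kQ n\<^esub> = (\<lambda>p. 0)"
  "x \<oplus>\<^bsub>kQ n\<^esub> y = (\<lambda>p. x p + y p)"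
  by (simp_all add: kQ_def)

lemma carrier_add:
  assumes "f \<in> kQ_carrier n" "g \<in> kQ_carrier n"
  shows "(\<lambda>p. f p + g p) \<in> kQ_carrier n"
proof -
  have "{p. f p + g p \<noteq> 0} \<subseteq> {p. f p \<noteq> 0} \<union> {p. g p \<noteq> 0}" by auto
  then show ?thesis using assms unfolding kQ_carrier_def
    by (auto intro: finite_subset)
qed

lemma one_carrier: "kQ_one n \<in> kQ_carrier n"
proof -
  have "{p. kQ_one n p \<noteq> (0::'a::field)} \<subseteq> Triv ` {..<n}"
  proof
    fix p assume "p \<in> {p. kQ_one n p \<noteq> (0::'a::field)}"
    then show "p \<in> Triv ` {..<n}" by (cases p) (auto simp: kQ_one_def split: if_splits)
  qed
  moreover have "kQ_one n p \<noteq> (0::'a) \<Longrightarrow> valid_path n p" for p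
    by (cases p) (auto simp: kQ_one_def split: if_splits)
  ultimately show ?thesis unfolding kQ_carrier_def
    by (auto intro: finite_subset)
qed

lemma sc_carrier: "f \<in> kQ_carrier n \<Longrightarrow> sc c f \<in> kQ_carrier n"
  unfolding kQ_carrier_def sc_def
  by (auto intro: finite_subset[of _ "{p. f p \<noteq> 0}"])

lemma asrc_lt: "0 < n \<Longrightarrow> aidx a < n \<Longrightarrow> asrc n a < n"
  by (cases a) (auto simp: nx_def)
lemma atgt_lt: "0 < n \<Longrightarrow> aidx a < n \<Longrightarrow> atgt n a < n"
  by (cases a) (auto simp: nx_def)

lemma valid_src: "valid_path n p \<Longrightarrow> 0 < n \<Longrightarrow> psrc n p < n"
  by (cases p) (auto intro!: asrc_lt)
lemma valid_tgt: "valid_path n p \<Longrightarrow> 0 < n \<Longrightarrow> ptgt n p < n"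
  by (cases p) (auto intro!: atgt_lt)

lemma mult_sc_one:
  assumes n: "0 < n" and f: "f \<in> kQ_carrier n"
  shows "kQ_mult n (sc c (kQ_one n)) f = sc c f"
proof
  fix p
  show "kQ_mult n (sc c (kQ_one n)) f p = sc c f p"
  proof (cases "c \<noteq> 0 \<and> f p \<noteq> 0")
    case True
    then have v: "valid_path n p" using f unfolding kQ_carrier_def by auto
    have "{(q, r). sc c (kQ_one n) q \<noteq> 0 \<and> f r \<noteq> 0 \<and> pcomp n q r = Some p} = {(Triv (psrc n p), p)}"
      using True valid_src[OF v n]
      by (auto simp: sc_def kQ_one_def pcomp_def split: path.splits if_splits)
    then show ?thesis by (simp add: kQ_mult_def sc_def kQ_one_def valid_src[OF v n])
  next
    case False
    have e: "{(q, r). sc c (kQ_one n) q \<noteq> 0 \<and> f r \<noteq> 0 \<and> pcomp n q r = Some p} = {}"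
      using False
      by (auto simp: sc_def kQ_one_def pcomp_def split: path.splits if_splits)
    show ?thesis using False by (simp only: kQ_mult_def e) (auto simp: sc_def)
  qed
qed

fun pmap :: "(arr \<Rightarrow> arr) \<Rightarrow> (nat \<Rightarrow> nat) \<Rightarrow> path \<Rightarrow> path" where
  "pmap s t (Triv i) = Triv (t i)"
| "pmap s t (Path as) = Path (map s as)"

fun pw :: "(arr \<Rightarrow> 'a::field) \<Rightarrow> path \<Rightarrow> 'a" where
  "pw wa (Triv i) = 1"
| "pw wa (Path as) = prod_list (map wa as)"

definition Phi :: "(arr \<Rightarrow> arr) \<Rightarrow> (nat \<Rightarrow> nat) \<Rightarrow> (arr \<Rightarrow> 'a::field) \<Rightarrow> (path \<Rightarrow> 'a) \<Rightarrow> path \<Rightarrow> 'a" where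
  "Phi s' t' wa f = (\<lambda>q. pw wa (pmap s' t' q) * f (pmap s' t' q))"

lemma pw_pcat: "pw wa (pcat p q) = pw wa p * pw wa q"
  by (cases "(p, q)" rule: pcat.cases) auto

lemma pmap_pcat: "pmap s t (pcat p q) = pcat (pmap s t p) (pmap s t q)"
  by (cases "(p, q)" rule: pcat.cases) auto

lemma prod_list_nz: "(\<And>a. wa a \<noteq> (0::'a::field)) \<Longrightarrow> prod_list (map wa as) \<noteq> 0"
  by (induction as) auto

lemma prod_list_inv: "prod_list (map (\<lambda>a. inverse (wa a)) as) = inverse (prod_list (map wa as) :: 'a::field)"
  by (induction as) (auto simp: inverse_mult_distrib)

locale pm =
  fixes n :: nat and s :: "arr \<Rightarrow> arr" and t :: "nat \<Rightarrow> nat"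
    and s' :: "arr \<Rightarrow> arr" and t' :: "nat \<Rightarrow> nat" and wa :: "arr \<Rightarrow> 'a::field"
  assumes npos: "0 < n"
    and ss': "\<And>a. s' (s a) = a" and s's: "\<And>a. s (s' a) = a"
    and tt': "\<And>i. t' (t i) = i" and t't: "\<And>i. t (t' i) = i"
    and sgood: "\<And>a. aidx a < n \<Longrightarrow> aidx (s a) < n \<and> asrc n (s a) = t (asrc n a) \<and> atgt n (s a) = t (atgt n a)"
    and s'good: "\<And>a. aidx a < n \<Longrightarrow> aidx (s' a) < n \<and> asrc n (s' a) = t' (asrc n a) \<and> atgt n (s' a) = t' (atgt n a)"
    and tlt: "\<And>i. i < n \<Longrightarrow> t i < n" and t'lt: "\<And>i. i < n \<Longrightarrow> t' i < n"
    and wnz: "\<And>a. wa a \<noteq> 0"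
begin

abbreviation "\<sigma> \<equiv> pmap s t"
abbreviation "\<sigma>' \<equiv> pmap s' t'"
abbreviation "F \<equiv> Phi s' t' wa"

lemma pmap_inv[simp]: "\<sigma>' (\<sigma> p) = p" "\<sigma> (\<sigma>' p) = p"
  by (cases p; simp add: ss' s's tt' t't comp_def)+

lemma sigma_inj: "\<sigma> p = \<sigma> q \<longleftrightarrow> p = q"
  by (metis pmap_inv(1))

lemma pw_nz: "pw wa p \<noteq> 0"
  using prod_list_nz[of wa, OF wnz] by (cases p) auto

lemma composable_map:
  "(\<forall>a\<in>set as. aidx a < n) \<Longrightarrow> composable n as \<Longrightarrow> composable n (map s as)"
  by (induction as rule: induct_list012) (auto simp: sgood)

lemma valid_sigma: "valid_path n p \<Longrightarrow> valid_path n (\<sigma> p)"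
  by (cases p) (auto simp: tlt sgood composable_map)

lemma tgt_sigma: "valid_path n p \<Longrightarrow> ptgt n (\<sigma> p) = t (ptgt n p)"
  by (cases p) (auto simp: last_map sgood)

lemma src_sigma: "valid_path n p \<Longrightarrow> psrc n (\<sigma> p) = t (psrc n p)"
  by (cases p) (auto simp: hd_map sgood)

lemma t_inj: "t i = t j \<longleftrightarrow> i = j"
  by (metis tt')

lemma pcomp_sigma:
  assumes "valid_path n p" "valid_path n q"
  shows "pcomp n (\<sigma> p) (\<sigma> q) = Some (\<sigma> r) \<longleftrightarrow> pcomp n p q = Some r"
  using assms by (auto simp: pcomp_def tgt_sigma src_sigma t_inj pmap_pcat[symmetric] sigma_inj)

lemma F_sigma[simp]: "F f (\<sigma> p) = pw wa p * f p"
  by (simp add: Phi_def)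

lemma F_carrier: assumes "f \<in> kQ_carrier n" shows "F f \<in> kQ_carrier n"
proof -
  have "{q. F f q \<noteq> 0} \<subseteq> \<sigma> ` {p. f p \<noteq> 0}"
  proof
    fix q assume "q \<in> {q. F f q \<noteq> 0}"
    then have "f (\<sigma>' q) \<noteq> 0" by (auto simp: Phi_def)
    then show "q \<in> \<sigma> ` {p. f p \<noteq> 0}" by (metis (mono_tags) image_eqI mem_Collect_eq pmap_inv(2))
  qed
  moreover have "F f q \<noteq> 0 \<Longrightarrow> valid_path n q" for q
    using assms valid_sigma[of "\<sigma>' q"] by (auto simp: Phi_def kQ_carrier_def)
  ultimately show ?thesis using assms unfolding kQ_carrier_def by (auto intro: finite_subset)
qed

lemma F_add: "F (\<lambda>p. f p + g p) = (\<lambda>p. F f p + F g p)"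
  by (auto simp: Phi_def algebra_simps)

lemma F_sc: "F (sc c f) = sc c (F f)"
  by (auto simp: Phi_def sc_def algebra_simps)

lemma F_one: "F (kQ_one n) = kQ_one n"
proof
  fix q show "F (kQ_one n) q = kQ_one n q"
  proof (cases q)
    case (Triv j)
    have "t' j < n \<longleftrightarrow> j < n" using t'lt tlt t't by metis
    then show ?thesis using Triv by (simp add: Phi_def kQ_one_def)
  next
    case (Path as) then show ?thesis by (simp add: Phi_def kQ_one_def)
  qed
qed

lemma F_mult:
  assumes f: "f \<in> kQ_carrier n" and g: "g \<in> kQ_carrier n"
  shows "F (kQ_mult n f g) = kQ_mult n (F f) (F g)"
proof
  fix q
  define p where "p = \<sigma>' q"
  have q: "q = \<sigma> p" by (simp add: p_def)
  define S where "S = {(a, b). f a \<noteq> 0 \<and> g b \<noteq> 0 \<and> pcomp n a b = Some p}"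
  have vf: "f a \<noteq> 0 \<Longrightarrow> valid_path n a" for a using f by (auto simp: kQ_carrier_def)
  have vg: "g a \<noteq> 0 \<Longrightarrow> valid_path n a" for a using g by (auto simp: kQ_carrier_def)
  have T: "{(a, b). F f a \<noteq> 0 \<and> F g b \<noteq> 0 \<and> pcomp n a b = Some (\<sigma> p)} = map_prod \<sigma> \<sigma> ` S"
  proof (intro Set.set_eqI iffI)
    fix x assume "x \<in> {(a, b). F f a \<noteq> 0 \<and> F g b \<noteq> 0 \<and> pcomp n a b = Some (\<sigma> p)}"
    then obtain a b where x: "x = (a, b)" and h: "F f a \<noteq> 0" "F g b \<noteq> 0" "pcomp n a b = Some (\<sigma> p)"
      by auto
    have a: "a = \<sigma> (\<sigma>' a)" and b: "b = \<sigma> (\<sigma>' b)" by simp_all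
    have fa: "f (\<sigma>' a) \<noteq> 0" and gb: "g (\<sigma>' b) \<noteq> 0" using h by (auto simp: Phi_def)
    have "pcomp n (\<sigma>' a) (\<sigma>' b) = Some p"
      using h(3) pcomp_sigma[OF vf[OF fa] vg[OF gb], of p] a b by metis
    then show "x \<in> map_prod \<sigma> \<sigma> ` S" unfolding S_def x using fa gb
      by (intro image_eqI[of _ _ "(\<sigma>' a, \<sigma>' b)"]) auto
  next
    fix x assume "x \<in> map_prod \<sigma> \<sigma> ` S"
    then obtain a0 b0 where x: "x = (\<sigma> a0, \<sigma> b0)" and h: "f a0 \<noteq> 0" "g b0 \<noteq> 0" "pcomp n a0 b0 = Some p"
      unfolding S_def by auto
    then show "x \<in> {(a, b). F f a \<noteq> 0 \<and> F g b \<noteq> 0 \<and> pcomp n a b = Some (\<sigma> p)}"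
      using pcomp_sigma[OF vf[OF h(1)] vg[OF h(2)]] pw_nz by auto
  qed
  have inj: "inj_on (map_prod \<sigma> \<sigma>) S"
    by (auto simp: inj_on_def sigma_inj)
  have "kQ_mult n (F f) (F g) q = (\<Sum>(a, b)\<in>map_prod \<sigma> \<sigma> ` S. F f a * F g b)"
    unfolding kQ_mult_def q T ..
  also have "\<dots> = (\<Sum>(a, b)\<in>S. F f (\<sigma> a) * F g (\<sigma> b))"
    by (subst sum.reindex[OF inj]) (simp add: case_prod_beta)
  also have "\<dots> = (\<Sum>(a, b)\<in>S. pw wa p * (f a * g b))"
  proof (rule sum.cong[OF refl], clarify)
    fix a b assume "(a, b) \<in> S"
    then have "pcat a b = p" by (auto simp: S_def pcomp_def split: if_splits)
    then have "pw wa p = pw wa a * pw wa b" by (metis pw_pcat)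
    then show "F f (\<sigma> a) * F g (\<sigma> b) = pw wa p * (f a * g b)" by simp
  qed
  also have "\<dots> = pw wa p * kQ_mult n f g p"
    by (simp add: kQ_mult_def S_def sum_distrib_left case_prod_beta)
  also have "\<dots> = F (kQ_mult n f g) q" by (simp add: q)
  finally show "F (kQ_mult n f g) q = kQ_mult n (F f) (F g) q" ..
qed

lemma bas_sigma': "bas p (\<sigma>' q) = bas (\<sigma> p) q"
  by (auto simp: bas_def)

lemma pw_bas: "pw wa (\<sigma>' q) * bas p (\<sigma>' q) = pw wa p * bas (\<sigma> p) q"
  by (auto simp: bas_def)

lemma F_bas: "F (bas p) = sc (pw wa p) (bas (\<sigma> p))"
  by (auto simp: Phi_def sc_def pw_bas)

lemma F_rel:
  "F (\<lambda>p. bas A p - a * bas B p - b * bas C p - c * bas P4 p) =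
   (\<lambda>q. pw wa A * bas (\<sigma> A) q - a * pw wa B * bas (\<sigma> B) q - b * pw wa C * bas (\<sigma> C) q
      - c * pw wa P4 * bas (\<sigma> P4) q)"
proof
  fix q
  let ?w = "pw wa (\<sigma>' q)"
  have "F (\<lambda>p. bas A p - a * bas B p - b * bas C p - c * bas P4 p) q =
    ?w * (bas A (\<sigma>' q) - a * bas B (\<sigma>' q) - b * bas C (\<sigma>' q) - c * bas P4 (\<sigma>' q))"
    by (simp add: Phi_def)
  also have "\<dots> = ?w * bas A (\<sigma>' q) - a * (?w * bas B (\<sigma>' q)) - b * (?w * bas C (\<sigma>' q))
      - c * (?w * bas P4 (\<sigma>' q))"
    by (simp add: algebra_simps)
  also have "\<dots> = pw wa A * bas (\<sigma> A) q - a * (pw wa B * bas (\<sigma> B) q) - b * (pw wa C * bas (\<sigma> C) q)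
      - c * (pw wa P4 * bas (\<sigma> P4) q)"
    by (simp only: pw_bas)
  finally show "F (\<lambda>p. bas A p - a * bas B p - b * bas C p - c * bas P4 p) q = 
   pw wa A * bas (\<sigma> A) q - a * pw wa B * bas (\<sigma> B) q - b * pw wa C * bas (\<sigma> C) q
      - c * pw wa P4 * bas (\<sigma> P4) q"
    by (simp add: mult.assoc)
qed

definition "wa' = (\<lambda>b. inverse (wa (s' b)))"

lemma pw_wa': "pw wa' (\<sigma> p) = inverse (pw wa p)"
  by (cases p) (simp_all add: wa'_def comp_def ss' prod_list_inv)

lemma pm_inv: "pm n s' t' s t wa'"
  by (unfold_locales) (auto simp: npos ss' s's tt' t't sgood s'good tlt t'lt wa'_def wnz)

abbreviation "G \<equiv> Phi s t wa'"

lemma GF[simp]: "G (F f) = f"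
  by (auto simp: Phi_def pw_wa' pw_nz)

lemma FG[simp]: "F (G g) = g"
proof
  fix q
  have "pw wa' (\<sigma> (\<sigma>' q)) = inverse (pw wa (\<sigma>' q))" by (rule pw_wa')
  then show "F (G g) q = g q" by (simp add: Phi_def pw_nz)
qed

end



lemma neg_carrier: "x \<in> kQ_carrier n \<Longrightarrow> (\<lambda>p. - x p) \<in> kQ_carrier n"
  using sc_carrier[of x n "-1"] by (simp add: sc_def)

lemma kQ_neg:
  fixes x :: "path \<Rightarrow> 'a::field"
  assumes "ring (kQ n :: (path \<Rightarrow> 'a) ring)" "x \<in> kQ_carrier n"
  shows "\<ominus>\<^bsub>kQ n\<^esub> x = (\<lambda>p. - x p)"
proof -
  interpret ring "kQ n :: (path \<Rightarrow> 'a) ring" by (rule assms(1))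
  show ?thesis
    by (rule minus_equality) (use assms(2) neg_carrier in auto)
qed

lemma add_hom_0:
  fixes G :: "(path \<Rightarrow> 'a::field) \<Rightarrow> path \<Rightarrow> 'a"
  assumes Gadd: "\<And>x y. G (\<lambda>p. x p + y p) = (\<lambda>p. G x p + G y p)"
  shows "G (\<lambda>p. 0) = (\<lambda>p. (0::'a::field))"
proof
  fix p
  have h: "G (\<lambda>p. 0::'a) = (\<lambda>p. G (\<lambda>p. 0) p + G (\<lambda>p. 0) p)" using Gadd[of "\<lambda>p. 0" "\<lambda>p. 0"] by simp
  from fun_cong[OF h, of p] show "G (\<lambda>p. 0::'a) p = (0::'a)" by (metis add_cancel_right_right)
qed

lemma add_hom_neg:
  fixes G :: "(path \<Rightarrow> 'a::field) \<Rightarrow> path \<Rightarrow> 'a"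
  assumes Gadd: "\<And>x y. G (\<lambda>p. x p + y p) = (\<lambda>p. G x p + G y p)"
  shows "G (\<lambda>p. - x p) = (\<lambda>p. - G x p :: 'a::field)"
proof
  fix p
  have "G (\<lambda>p. - x p + x p) = (\<lambda>p. G (\<lambda>p. - x p) p + G x p)" by (rule Gadd)
  then have "(\<lambda>p. 0) = (\<lambda>p. G (\<lambda>p. - x p) p + G x p)" using add_hom_0[of G, OF Gadd] by simp
  from fun_cong[OF this, of p] show "G (\<lambda>p. - x p) p = - G x p" by (simp add: eq_neg_iff_add_eq_0)
qed

lemma ideal_img:
  fixes G F :: "(path \<Rightarrow> 'a::field) \<Rightarrow> (path \<Rightarrow> 'a)"
  assumes J: "ideal J (kQ n)"
    and FG: "\<And>y. G (F y) = y"
    and Fc: "\<And>x. x \<in> kQ_carrier n \<Longrightarrow> F x \<in> kQ_carrier n"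
    and Gc: "\<And>x. x \<in> kQ_carrier n \<Longrightarrow> G x \<in> kQ_carrier n"
    and Gadd: "\<And>x y. G (\<lambda>p. x p + y p) = (\<lambda>p. G x p + G y p)"
    and Gmul: "\<And>x y. x \<in> kQ_carrier n \<Longrightarrow> y \<in> kQ_carrier n \<Longrightarrow> G (kQ_mult n x y) = kQ_mult n (G x) (G y)"
  shows "ideal (G ` J) (kQ n)"
proof -
  interpret ideal J "kQ n" by (rule J)
  have Jc: "J \<subseteq> kQ_carrier n" using a_subset by simp
  have is_ring: "ring (kQ n :: (path \<Rightarrow> 'a) ring)" using J unfolding ideal_def by blast
  show ?thesis
  proof (rule idealI)
    show "ring (kQ n :: (path \<Rightarrow> 'a) ring)" by (rule is_ring)
    show "subgroup (G ` J) (add_monoid (kQ n :: (path \<Rightarrow> 'a) ring))"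
    proof (rule add.subgroupI)
      show "G ` J \<subseteq> carrier (kQ n :: (path \<Rightarrow> 'a) ring)" using Jc Gc by auto
    next
      show "G ` J \<noteq> {}" using additive_subgroup.zero_closed[OF is_additive_subgroup] by auto
    next
      fix a assume "a \<in> G ` J"
      then obtain b where b: "b \<in> J" "a = G b" by auto
      have bc: "b \<in> kQ_carrier n" using b Jc by auto
      have "\<ominus>\<^bsub>kQ n\<^esub> a = (\<lambda>p. - G b p)" using kQ_neg[OF is_ring Gc[OF bc]] b by simp
      also have "\<dots> = G (\<lambda>p. - b p)" using add_hom_neg[of G, OF Gadd] by simp
      also have "(\<lambda>p. - b p) = \<ominus>\<^bsub>kQ n\<^esub> b" using kQ_neg[OF is_ring bc] by simp
      finally have "\<ominus>\<^bsub>kQ n\<^esub> a = G (\<ominus>\<^bsub>kQ n\<^esub> b)" .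
      then show "\<ominus>\<^bsub>kQ n\<^esub> a \<in> G ` J"
        using b(1) a_inv_closed by simp
    next
      fix a b assume "a \<in> G ` J" "b \<in> G ` J"
      then obtain a0 b0 where "a0 \<in> J" "b0 \<in> J" "a = G a0" "b = G b0" by auto
      moreover have "(\<lambda>p. a0 p + b0 p) \<in> J" using additive_subgroup.a_closed[OF is_additive_subgroup calculation(1,2)] by simp
      ultimately show "a \<oplus>\<^bsub>kQ n\<^esub> b \<in> G ` J"
        using Gadd[of a0 b0] by (simp add: image_iff) metis
    qed
  next
    fix a and x :: "path \<Rightarrow> 'a" assume a: "a \<in> G ` J" and x: "x \<in> carrier (kQ n)"
    obtain b where b: "b \<in> J" "a = G b" using a by auto
    have "x = G (F x)" by (simp add: FG)
    then have "x \<otimes>\<^bsub>kQ n\<^esub> a = G (F x \<otimes>\<^bsub>kQ n\<^esub> b)"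
      using Gmul[of "F x" b] Fc x b Jc by auto
    moreover have "F x \<otimes>\<^bsub>kQ n\<^esub> b \<in> J" using I_l_closed b Fc x by simp
    ultimately show "x \<otimes>\<^bsub>kQ n\<^esub> a \<in> G ` J" by auto
  next
    fix a and x :: "path \<Rightarrow> 'a" assume a: "a \<in> G ` J" and x: "x \<in> carrier (kQ n)"
    obtain b where b: "b \<in> J" "a = G b" using a by auto
    have "x = G (F x)" by (simp add: FG)
    then have "a \<otimes>\<^bsub>kQ n\<^esub> x = G (b \<otimes>\<^bsub>kQ n\<^esub> F x)"
      using Gmul[of b "F x"] Fc x b Jc by auto
    moreover have "b \<otimes>\<^bsub>kQ n\<^esub> F x \<in> J" using I_r_closed b Fc x by simp
    ultimately show "a \<otimes>\<^bsub>kQ n\<^esub> x \<in> G ` J" by auto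
  qed
qed

lemma gen_img_sub:
  fixes G F :: "(path \<Rightarrow> 'a::field) \<Rightarrow> (path \<Rightarrow> 'a)"
  assumes FG: "\<And>y. G (F y) = y" and GF: "\<And>y. F (G y) = y"
    and Fc: "\<And>x. x \<in> kQ_carrier n \<Longrightarrow> F x \<in> kQ_carrier n"
    and Gc: "\<And>x. x \<in> kQ_carrier n \<Longrightarrow> G x \<in> kQ_carrier n"
    and Gadd: "\<And>x y. G (\<lambda>p. x p + y p) = (\<lambda>p. G x p + G y p)"
    and Gmul: "\<And>x y. x \<in> kQ_carrier n \<Longrightarrow> y \<in> kQ_carrier n \<Longrightarrow> G (kQ_mult n x y) = kQ_mult n (G x) (G y)"
    and FS: "F ` S \<subseteq> genideal (kQ n) S'"
  shows "F ` genideal (kQ n) S \<subseteq> genideal (kQ n) S'"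
proof
  fix y assume "y \<in> F ` genideal (kQ n) S"
  then obtain x where x: "x \<in> genideal (kQ n) S" "y = F x" by auto
  show "y \<in> genideal (kQ n) S'"
    unfolding genideal_def
  proof (rule InterI, clarify)
    fix J assume J: "ideal J (kQ n)" "S' \<subseteq> J"
    have GJ: "ideal (G ` J) (kQ n)" by (rule ideal_img[OF J(1) FG Fc Gc Gadd Gmul])
    have "genideal (kQ n) S' \<subseteq> J" unfolding genideal_def using J by auto
    then have "S \<subseteq> G ` J" using FS FG by (metis image_eqI image_subset_iff subset_iff)
    then have "x \<in> G ` J" using x(1) GJ unfolding genideal_def by auto
    then show "y \<in> J" using x(2) GF by auto
  qed
qed

lemma genideal_cases: "genideal (kQ n) S \<subseteq> kQ_carrier n \<or> genideal (kQ n) S = UNIV"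
proof (cases "\<exists>J. ideal J (kQ n) \<and> S \<subseteq> J")
  case True
  then obtain J where J: "ideal J (kQ n)" "S \<subseteq> J" by auto
  then have "genideal (kQ n) S \<subseteq> J" unfolding genideal_def by auto
  moreover have "J \<subseteq> kQ_carrier n" using J(1) additive_subgroup.a_subset ideal.axioms(1) by fastforce
  ultimately show ?thesis by auto
next
  case False
  then have "{J. ideal J (kQ n) \<and> S \<subseteq> J} = {}" by auto
  then show ?thesis unfolding genideal_def by auto
qed

lemma coset_kQ: "H +>\<^bsub>kQ n\<^esub> x = (\<Union>h\<in>H. {(\<lambda>p. h p + x p)})"
  by (simp add: a_r_coset_def')

lemma UNIV_coset: "(UNIV :: (path \<Rightarrow> 'a::field) set) +>\<^bsub>kQ n\<^esub> x = UNIV"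
proof -
  have "z \<in> (\<Union>h\<in>UNIV. {(\<lambda>p. h p + x p)})" for z :: "path \<Rightarrow> 'a"
    by (rule UN_I[of "\<lambda>p. z p - x p"]) auto
  then show ?thesis by (auto simp: coset_kQ)
qed

lemma quot_iso:
  fixes G F :: "(path \<Rightarrow> 'a::field) \<Rightarrow> (path \<Rightarrow> 'a)"
  assumes FG: "\<And>y. G (F y) = y" and GF: "\<And>y. F (G y) = y"
    and Fc: "\<And>x. x \<in> kQ_carrier n \<Longrightarrow> F x \<in> kQ_carrier n"
    and Gc: "\<And>x. x \<in> kQ_carrier n \<Longrightarrow> G x \<in> kQ_carrier n"
    and Fadd: "\<And>x y. F (\<lambda>p. x p + y p) = (\<lambda>p. F x p + F y p)"
    and Gadd: "\<And>x y. G (\<lambda>p. x p + y p) = (\<lambda>p. G x p + G y p)"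
    and Fmul: "\<And>x y. x \<in> kQ_carrier n \<Longrightarrow> y \<in> kQ_carrier n \<Longrightarrow> F (kQ_mult n x y) = kQ_mult n (F x) (F y)"
    and Gmul: "\<And>x y. x \<in> kQ_carrier n \<Longrightarrow> y \<in> kQ_carrier n \<Longrightarrow> G (kQ_mult n x y) = kQ_mult n (G x) (G y)"
    and Fone: "F (kQ_one n) = kQ_one n"
    and FS: "F ` S \<subseteq> genideal (kQ n) S'"
    and GS: "G ` S' \<subseteq> genideal (kQ n) S"
  shows "\<exists>h \<in> ring_iso (kQ n Quot genideal (kQ n) S) (kQ n Quot genideal (kQ n) S').
           \<forall>x. h (genideal (kQ n) S +>\<^bsub>kQ n\<^esub> x) = genideal (kQ n) S' +>\<^bsub>kQ n\<^esub> F x"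
proof -
  define I where "I = genideal (kQ n) S"
  define I' where "I' = genideal (kQ n) S'"
  have s1: "F ` I \<subseteq> I'" unfolding I_def I'_def by (rule gen_img_sub[OF FG GF Fc Gc Gadd Gmul FS])
  have s2: "G ` I' \<subseteq> I" unfolding I_def I'_def by (rule gen_img_sub[OF GF FG Gc Fc Fadd Fmul GS])
  have FI: "F ` I = I'"
  proof
    show "I' \<subseteq> F ` I" using s2 GF by (metis image_subset_iff subsetI image_eqI)
  qed (rule s1)
  have co: "F ` (I +>\<^bsub>kQ n\<^esub> x) = I' +>\<^bsub>kQ n\<^esub> F x" for x
    unfolding coset_kQ FI[symmetric] image_UN by (simp add: Fadd)
  have cases: "I \<subseteq> kQ_carrier n \<or> (I = UNIV \<and> I' = UNIV)"
  proof -
    have "surj F" using GF by (metis surjI)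
    then show ?thesis using genideal_cases[of n S] FI unfolding I_def by auto
  qed
  have carrQ: "carrier (kQ n Quot J) = {J +>\<^bsub>kQ n\<^esub> a | a. a \<in> kQ_carrier n}" for J
    by (auto simp: FactRing_def A_RCOSETS_def')
  have multQ: "A \<otimes>\<^bsub>kQ n Quot J\<^esub> B = (\<Union>a\<in>A. \<Union>b\<in>B. J +>\<^bsub>kQ n\<^esub> kQ_mult n a b)" for J A B
    by (simp add: FactRing_def rcoset_mult_def)
  have addQ: "A \<oplus>\<^bsub>kQ n Quot J\<^esub> B = (\<Union>a\<in>A. \<Union>b\<in>B. {(\<lambda>p. a p + b p)})" for J A B
    by (simp add: FactRing_def set_add_def')
  have oneQ: "\<one>\<^bsub>kQ n Quot J\<^esub> = J +>\<^bsub>kQ n\<^esub> kQ_one n" for J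
    by (simp add: FactRing_def)
  have injF: "inj F" using FG by (metis injI)
  have mem_carr: "u \<in> kQ_carrier n" if "I \<subseteq> kQ_carrier n" "u \<in> I +>\<^bsub>kQ n\<^esub> a" "a \<in> kQ_carrier n" for u a
    using that carrier_add unfolding coset_kQ by blast
  have key: "I' +>\<^bsub>kQ n\<^esub> F (kQ_mult n u v) = I' +>\<^bsub>kQ n\<^esub> kQ_mult n (F u) (F v)"
    if "u \<in> I +>\<^bsub>kQ n\<^esub> a" "a \<in> kQ_carrier n" "v \<in> I +>\<^bsub>kQ n\<^esub> b" "b \<in> kQ_carrier n" for u v a b
    using cases
  proof
    assume "I \<subseteq> kQ_carrier n"
    then show ?thesis using Fmul mem_carr that by metis
  next
    assume "I = UNIV \<and> I' = UNIV"
    then show ?thesis by (simp add: UNIV_coset)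
  qed
  show ?thesis
  proof (rule bexI[of _ "image F"], unfold I_def[symmetric] I'_def[symmetric])
    show "\<forall>x. F ` (I +>\<^bsub>kQ n\<^esub> x) = I' +>\<^bsub>kQ n\<^esub> F x" using co by auto
    show "image F \<in> ring_iso (kQ n Quot I) (kQ n Quot I')"
    proof (rule ring_iso_memI)
      fix x assume "x \<in> carrier (kQ n Quot I)"
      then show "F ` x \<in> carrier (kQ n Quot I')" unfolding carrQ using co Fc by blast
    next
      fix x y assume x: "x \<in> carrier (kQ n Quot I)" and y: "y \<in> carrier (kQ n Quot I)"
      obtain a where a: "a \<in> kQ_carrier n" "x = I +>\<^bsub>kQ n\<^esub> a" using x unfolding carrQ by auto
      obtain b where b: "b \<in> kQ_carrier n" "y = I +>\<^bsub>kQ n\<^esub> b" using y unfolding carrQ by auto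
      have "F ` (x \<otimes>\<^bsub>kQ n Quot I\<^esub> y) = (\<Union>u\<in>x. \<Union>v\<in>y. I' +>\<^bsub>kQ n\<^esub> F (kQ_mult n u v))"
        unfolding multQ image_UN co ..
      also have "\<dots> = (\<Union>u\<in>x. \<Union>v\<in>y. I' +>\<^bsub>kQ n\<^esub> kQ_mult n (F u) (F v))"
        using key a b by (intro SUP_cong refl) auto
      also have "\<dots> = F ` x \<otimes>\<^bsub>kQ n Quot I'\<^esub> F ` y"
        unfolding multQ by simp
      finally show "F ` (x \<otimes>\<^bsub>kQ n Quot I\<^esub> y) = F ` x \<otimes>\<^bsub>kQ n Quot I'\<^esub> F ` y" .
    next
      fix x y
      show "F ` (x \<oplus>\<^bsub>kQ n Quot I\<^esub> y) = F ` x \<oplus>\<^bsub>kQ n Quot I'\<^esub> F ` y"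
        unfolding addQ image_UN by (simp add: Fadd)
    next
      show "F ` \<one>\<^bsub>kQ n Quot I\<^esub> = \<one>\<^bsub>kQ n Quot I'\<^esub>" unfolding oneQ co Fone ..
    next
      show "bij_betw (image F) (carrier (kQ n Quot I)) (carrier (kQ n Quot I'))"
      proof (rule bij_betw_imageI)
        show "inj_on (image F) (carrier (kQ n Quot I))"
          using injF by (simp add: inj_on_def inj_image_eq_iff)
        show "image F ` carrier (kQ n Quot I) = carrier (kQ n Quot I')"
        proof
          show "image F ` carrier (kQ n Quot I) \<subseteq> carrier (kQ n Quot I')"
            unfolding carrQ using co Fc by blast
          show "carrier (kQ n Quot I') \<subseteq> image F ` carrier (kQ n Quot I)"
          proof
            fix z assume "z \<in> carrier (kQ n Quot I')"
            then obtain b where b: "b \<in> kQ_carrier n" "z = I' +>\<^bsub>kQ n\<^esub> b" unfolding carrQ by auto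
            then have "z = F ` (I +>\<^bsub>kQ n\<^esub> G b)" using co GF by simp
            moreover have "I +>\<^bsub>kQ n\<^esub> G b \<in> carrier (kQ n Quot I)" unfolding carrQ using Gc b by auto
            ultimately show "z \<in> image F ` carrier (kQ n Quot I)" by auto
          qed
        qed
      qed
    qed
  qed
qed



lemma sc_one[simp]: "sc 1 f = f" by (simp add: sc_def)
lemma sc_sc: "sc a (sc b f) = sc (a * b) f" by (simp add: sc_def mult.assoc)

lemma sc_in_genideal:
  fixes r :: "path \<Rightarrow> 'a::field"
  assumes n: "0 < n" and r: "r \<in> S"
  shows "sc c r \<in> genideal (kQ n) S"
  unfolding genideal_def
proof (rule InterI, clarify)
  fix J assume J: "ideal J (kQ n)" "S \<subseteq> J"
  interpret ideal J "kQ n" by (rule J(1))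
  have rJ: "r \<in> J" using J r by auto
  have rc: "r \<in> kQ_carrier n" using rJ a_subset by auto
  have sc1: "sc c (kQ_one n) \<in> kQ_carrier n" by (intro sc_carrier one_carrier)
  have "kQ_mult n (sc c (kQ_one n)) r \<in> J"
    using I_l_closed[OF rJ, of "sc c (kQ_one n)"] sc1 by simp
  then show "sc c r \<in> J" using mult_sc_one[OF n rc] by simp
qed

context pm
begin

lemma iso_main:
  assumes A1: "\<And>r. r \<in> rels n \<alpha> \<beta> \<gamma> \<Longrightarrow> \<exists>c r'. r' \<in> rels n \<alpha>' \<beta>' \<gamma>' \<and> F r = sc c r'"
    and A2: "\<And>r'. r' \<in> rels n \<alpha>' \<beta>' \<gamma>' \<Longrightarrow> \<exists>c r. r \<in> rels n \<alpha> \<beta> \<gamma> \<and> c \<noteq> 0 \<and> F r = sc c r'"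
  shows "\<exists>h \<in> ring_iso (HH n \<alpha> \<beta> \<gamma>) (HH n \<alpha>' \<beta>' \<gamma>'). \<forall>x. h (cls n \<alpha> \<beta> \<gamma> x) = cls n \<alpha>' \<beta>' \<gamma>' (F x)"
proof -
  interpret Gi: pm n s' t' s t wa' by (rule pm_inv)
  have FS: "F ` rels n \<alpha> \<beta> \<gamma> \<subseteq> genideal (kQ n) (rels n \<alpha>' \<beta>' \<gamma>')"
  proof
    fix y assume "y \<in> F ` rels n \<alpha> \<beta> \<gamma>"
    then obtain r where r: "r \<in> rels n \<alpha> \<beta> \<gamma>" "y = F r" by auto
    obtain c r' where "r' \<in> rels n \<alpha>' \<beta>' \<gamma>'" "F r = sc c r'" using A1[OF r(1)] by auto
    then show "y \<in> genideal (kQ n) (rels n \<alpha>' \<beta>' \<gamma>')" using r(2) sc_in_genideal[OF npos] by simp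
  qed
  have GS: "G ` rels n \<alpha>' \<beta>' \<gamma>' \<subseteq> genideal (kQ n) (rels n \<alpha> \<beta> \<gamma>)"
  proof
    fix y assume "y \<in> G ` rels n \<alpha>' \<beta>' \<gamma>'"
    then obtain r' where r': "r' \<in> rels n \<alpha>' \<beta>' \<gamma>'" "y = G r'" by auto
    obtain c r where cr: "r \<in> rels n \<alpha> \<beta> \<gamma>" "c \<noteq> 0" "F r = sc c r'" using A2[OF r'(1)] by auto
    have "r' = sc (inverse c) (F r)" using cr by (simp add: sc_sc)
    then have "G r' = sc (inverse c) r" using Gi.F_sc by simp
    then show "y \<in> genideal (kQ n) (rels n \<alpha> \<beta> \<gamma>)" using r'(2) sc_in_genideal[OF npos cr(1)] by simp
  qed
  show ?thesis
    unfolding HH_def cls_def Irel_def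
    by (rule quot_iso[OF GF FG F_carrier Gi.F_carrier F_add Gi.F_add F_mult Gi.F_mult F_one FS GS])
qed

lemma ext_iso:
  assumes A1: "\<And>r. r \<in> rels n \<alpha> \<beta> \<gamma> \<Longrightarrow> \<exists>c r'. r' \<in> rels n \<alpha>' \<beta>' \<gamma>' \<and> F r = sc c r'"
    and A2: "\<And>r'. r' \<in> rels n \<alpha>' \<beta>' \<gamma>' \<Longrightarrow> \<exists>c r. r \<in> rels n \<alpha> \<beta> \<gamma> \<and> c \<noteq> 0 \<and> F r = sc c r'"
    and E: "\<And>i. i < n \<Longrightarrow> F (ev i) = E i"
    and U: "\<And>i. i < n \<Longrightarrow> F (uv i) = Uu i"
    and Dd: "\<And>i. i < n \<Longrightarrow> F (dv i) = Dd i"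
  shows "extends_to_iso n \<alpha> \<beta> \<gamma> \<alpha>' \<beta>' \<gamma>' E Uu Dd"
proof -
  obtain h where h: "h \<in> ring_iso (HH n \<alpha> \<beta> \<gamma>) (HH n \<alpha>' \<beta>' \<gamma>')"
    "\<And>x. h (cls n \<alpha> \<beta> \<gamma> x) = cls n \<alpha>' \<beta>' \<gamma>' (F x)"
    using iso_main[OF A1 A2] by blast
  show ?thesis unfolding extends_to_iso_def
    by (rule exI[of _ h]) (simp add: h E U Dd F_sc F_one)
qed

end



lemma nx_lt[simp]: "0 < n \<Longrightarrow> nx n i < n" by (simp add: nx_def)
lemma pr_lt[simp]: "0 < n \<Longrightarrow> pr n i < n" by (simp add: pr_def)
lemma nx_pr[simp]: "i < n \<Longrightarrow> nx n (pr n i) = i"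
  by (cases i) (auto simp: nx_def pr_def mod_Suc)
lemma pr_nx[simp]: "i < n \<Longrightarrow> pr n (nx n i) = i"
proof -
  assume i: "i < n"
  show ?thesis
  proof (cases "Suc i = n")
    case True then show ?thesis by (auto simp: nx_def pr_def)
  next
    case False then have "Suc i < n" using i by auto
    then show ?thesis by (simp add: nx_def pr_def)
  qed
qed

definition sh :: "nat \<Rightarrow> (nat \<Rightarrow> nat) \<Rightarrow> arr \<Rightarrow> arr" where
  "sh n f a = (case a of U i \<Rightarrow> if i < n then U (f i) else U i | D i \<Rightarrow> if i < n then D (f i) else D i)"
definition tm :: "nat \<Rightarrow> (nat \<Rightarrow> nat) \<Rightarrow> nat \<Rightarrow> nat" where
  "tm n f i = (if i < n then f i else i)"

lemma sh_simps[simp]: "sh n f (U i) = (if i < n then U (f i) else U i)" "sh n f (D i) = (if i < n then D (f i) else D i)"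
  by (simp_all add: sh_def)

lemma pw_one: "pw (\<lambda>_. 1::'a::field) p = 1"
proof (cases p)
  case (Path as) then show ?thesis by (induction as arbitrary: p) auto
qed simp

lemma pmI:
  fixes wa :: "arr \<Rightarrow> 'a::field"
  assumes "0 < n"
    and "\<And>i. s' (s (U i)) = U i" "\<And>i. s' (s (D i)) = D i"
    and "\<And>i. s (s' (U i)) = U i" "\<And>i. s (s' (D i)) = D i"
    and "\<And>i. t' (t i) = i" "\<And>i. t (t' i) = i"
    and "\<And>i. i < n \<Longrightarrow> aidx (s (U i)) < n \<and> asrc n (s (U i)) = t i \<and> atgt n (s (U i)) = t (nx n i)"
    and "\<And>i. i < n \<Longrightarrow> aidx (s (D i)) < n \<and> asrc n (s (D i)) = t (nx n i) \<and> atgt n (s (D i)) = t i"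
    and "\<And>i. i < n \<Longrightarrow> aidx (s' (U i)) < n \<and> asrc n (s' (U i)) = t' i \<and> atgt n (s' (U i)) = t' (nx n i)"
    and "\<And>i. i < n \<Longrightarrow> aidx (s' (D i)) < n \<and> asrc n (s' (D i)) = t' (nx n i) \<and> atgt n (s' (D i)) = t' i"
    and "\<And>i. i < n \<Longrightarrow> t i < n" "\<And>i. i < n \<Longrightarrow> t' i < n"
    and "\<And>a. wa a \<noteq> 0"
  shows "pm n s t s' t' wa"
proof (unfold_locales)
  fix a show "s' (s a) = a" by (cases a) (use assms in auto)
next
  fix a show "s (s' a) = a" by (cases a) (use assms in auto)
next
  fix a assume "aidx a < n"
  then show "aidx (s a) < n \<and> asrc n (s a) = t (asrc n a) \<and> atgt n (s a) = t (atgt n a)"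
    by (cases a) (use assms in auto)
next
  fix a assume "aidx a < n"
  then show "aidx (s' a) < n \<and> asrc n (s' a) = t' (asrc n a) \<and> atgt n (s' a) = t' (atgt n a)"
    by (cases a) (use assms in auto)
qed (use assms in auto)

lemma pm2: "0 < n \<Longrightarrow> pm n (sh n (nx n)) (tm n (nx n)) (sh n (pr n)) (tm n (pr n)) (\<lambda>_. 1::'a::field)"
  by (rule pmI) (auto simp: tm_def)

lemma rels_iff: "r \<in> rels n \<alpha> \<beta> \<gamma> \<longleftrightarrow> (\<exists>i<n. r = rel1 n \<alpha> \<beta> \<gamma> i \<or> r = rel2 n \<alpha> \<beta> \<gamma> i)"
  by (auto simp: rels_def)

lemma rel1_in: "i < n \<Longrightarrow> rel1 n \<alpha> \<beta> \<gamma> i \<in> rels n \<alpha> \<beta> \<gamma>" by (auto simp: rels_def)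
lemma rel2_in: "i < n \<Longrightarrow> rel2 n \<alpha> \<beta> \<gamma> i \<in> rels n \<alpha> \<beta> \<gamma>" by (auto simp: rels_def)
lemma relsE:
  assumes "r \<in> rels n \<alpha> \<beta> \<gamma>"
  obtains i where "i < n" "r = rel1 n \<alpha> \<beta> \<gamma> i" | i where "i < n" "r = rel2 n \<alpha> \<beta> \<gamma> i"
  using assms unfolding rels_def by blast

lemma exsc: "F r = sc c r' \<Longrightarrow> r' \<in> S \<Longrightarrow> \<exists>c r'. r' \<in> S \<and> F r = sc c r'" by blast
lemma exsc2: "F r = sc c r' \<Longrightarrow> r \<in> S \<Longrightarrow> c \<noteq> 0 \<Longrightarrow> \<exists>c r. r \<in> S \<and> c \<noteq> 0 \<and> F r = sc c r'" by blast

lemma case2: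
  fixes \<alpha> \<beta> \<gamma> :: "nat \<Rightarrow> 'a::field"
  assumes "1 \<le> n"
  shows "extends_to_iso n \<alpha> \<beta> \<gamma> (\<lambda>i. \<alpha> (pr n i)) (\<lambda>i. \<beta> (pr n i)) (\<lambda>i. \<gamma> (pr n i))
          (\<lambda>i. ev (nx n i)) (\<lambda>i. uv (nx n i)) (\<lambda>i. dv (nx n i))"
proof -
  have n: "0 < n" using assms by simp
  interpret P: pm n "sh n (nx n)" "tm n (nx n)" "sh n (pr n)" "tm n (pr n)" "\<lambda>_. 1::'a" by (rule pm2[OF n])
  define \<alpha>' where "\<alpha>' = (\<lambda>i. \<alpha> (pr n i))"
  define \<beta>' where "\<beta>' = (\<lambda>i. \<beta> (pr n i))"
  define \<gamma>' where "\<gamma>' = (\<lambda>i. \<gamma> (pr n i))"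
  have R1: "P.F (rel1 n \<alpha> \<beta> \<gamma> i) = sc 1 (rel1 n \<alpha>' \<beta>' \<gamma>' (nx n i))"
    if i: "i < n" for i
    unfolding rel1_def P.F_rel \<alpha>'_def \<beta>'_def \<gamma>'_def using i n by (simp add: pw_one tm_def)
  have R2: "P.F (rel2 n \<alpha> \<beta> \<gamma> i) = sc 1 (rel2 n \<alpha>' \<beta>' \<gamma>' (nx n i))"
    if i: "i < n" for i
    unfolding rel2_def P.F_rel \<alpha>'_def \<beta>'_def \<gamma>'_def using i n by (simp add: pw_one tm_def)
  have "extends_to_iso n \<alpha> \<beta> \<gamma> \<alpha>' \<beta>' \<gamma>' (\<lambda>i. ev (nx n i)) (\<lambda>i. uv (nx n i)) (\<lambda>i. dv (nx n i))"
  proof (rule P.ext_iso)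
    fix r assume "r \<in> rels n \<alpha> \<beta> \<gamma>"
    then show "\<exists>c r'. r' \<in> rels n \<alpha>' \<beta>' \<gamma>' \<and> P.F r = sc c r'"
    proof (cases rule: relsE)
      case (1 i) then show ?thesis using R1 rel1_in[OF nx_lt[OF n], of \<alpha>' \<beta>' \<gamma>' i] by (intro exsc[of P.F r 1]) simp_all
    next
      case (2 i) then show ?thesis using R2 rel2_in[OF nx_lt[OF n], of \<alpha>' \<beta>' \<gamma>' i] by (intro exsc[of P.F r 1]) simp_all
    qed
  next
    fix r' assume "r' \<in> rels n \<alpha>' \<beta>' \<gamma>'"
    then show "\<exists>c r. r \<in> rels n \<alpha> \<beta> \<gamma> \<and> c \<noteq> 0 \<and> P.F r = sc c r'"
    proof (cases rule: relsE)
      case (1 j) then show ?thesis using R1[of "pr n j"] n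
        by (intro exsc2[of P.F "rel1 n \<alpha> \<beta> \<gamma> (pr n j)" 1]) (simp_all add: rel1_in[OF pr_lt[OF n]])
    next
      case (2 j) then show ?thesis using R2[of "pr n j"] n
        by (intro exsc2[of P.F "rel2 n \<alpha> \<beta> \<gamma> (pr n j)" 1]) (simp_all add: rel2_in[OF pr_lt[OF n]])
    qed
  next
    fix i assume "i < n" then show "P.F (ev i) = ev (nx n i)"
      by (simp add: ev_def P.F_bas pw_one tm_def)
  next
    fix i assume "i < n" then show "P.F (uv i) = uv (nx n i)"
      by (simp add: uv_def P.F_bas pw_one)
  next
    fix i assume "i < n" then show "P.F (dv i) = dv (nx n i)"
      by (simp add: dv_def P.F_bas pw_one)
  qed
  then show ?thesis unfolding \<alpha>'_def \<beta>'_def \<gamma>'_def .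
qed



definition wl :: "nat \<Rightarrow> (nat \<Rightarrow> 'a::field) \<Rightarrow> arr \<Rightarrow> 'a" where
  "wl n lam a = (case a of U i \<Rightarrow> if i < n then lam i else 1 | D i \<Rightarrow> 1)"

lemma wl_simps[simp]: "wl n lam (U i) = (if i < n then lam i else 1)" "wl n lam (D i) = 1"
  by (simp_all add: wl_def)

lemma pm1: "0 < n \<Longrightarrow> (\<forall>i<n. lam i \<noteq> 0) \<Longrightarrow> pm n id id id id (wl n (lam :: nat \<Rightarrow> 'a::field))"
  by (rule pmI) (auto simp: wl_def split: arr.splits)

lemma pmap_id[simp]: "pmap id id p = p" by (cases p) auto

lemma case1:
  fixes \<alpha> \<beta> \<gamma> lam :: "nat \<Rightarrow> 'a::field"
  assumes "1 \<le> n" and lam: "\<forall>i<n. lam i \<noteq> 0"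
  shows "extends_to_iso n \<alpha> \<beta> \<gamma>
          (\<lambda>i. lam i * inverse (lam (pr n i)) * \<alpha> i)
          (\<lambda>i. lam (nx n i) * inverse (lam (pr n i)) * \<beta> i)
          (\<lambda>i. inverse (lam (pr n i)) * \<gamma> i)
          (\<lambda>i. ev i) (\<lambda>i. sc (lam i) (uv i)) (\<lambda>i. dv i)"
proof -
  have n: "0 < n" using assms by simp
  interpret P: pm n id id id id "wl n lam" by (rule pm1[OF n lam])
  define \<alpha>' where "\<alpha>' = (\<lambda>i. lam i * inverse (lam (pr n i)) * \<alpha> i)"
  define \<beta>' where "\<beta>' = (\<lambda>i. lam (nx n i) * inverse (lam (pr n i)) * \<beta> i)"
  define \<gamma>' where "\<gamma>' = (\<lambda>i. inverse (lam (pr n i)) * \<gamma> i)"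
  have lp: "lam (pr n i) \<noteq> 0" "lam (nx n i) \<noteq> 0" for i using lam n by simp_all
  have R1: "P.F (rel1 n \<alpha> \<beta> \<gamma> i) = sc (lam (pr n i) * lam i) (rel1 n \<alpha>' \<beta>' \<gamma>' i)"
    if i: "i < n" for i
    unfolding rel1_def P.F_rel \<alpha>'_def \<beta>'_def \<gamma>'_def sc_def
    by (rule ext) (simp add: i n lp field_simps)
  have R2: "P.F (rel2 n \<alpha> \<beta> \<gamma> i) = sc (lam (pr n i)) (rel2 n \<alpha>' \<beta>' \<gamma>' i)"
    if i: "i < n" for i
    unfolding rel2_def P.F_rel \<alpha>'_def \<beta>'_def \<gamma>'_def sc_def
    by (rule ext) (simp add: i n lp field_simps)
  have "extends_to_iso n \<alpha> \<beta> \<gamma> \<alpha>' \<beta>' \<gamma>' (\<lambda>i. ev i) (\<lambda>i. sc (lam i) (uv i)) (\<lambda>i. dv i)"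
  proof (rule P.ext_iso)
    fix r assume "r \<in> rels n \<alpha> \<beta> \<gamma>"
    then show "\<exists>c r'. r' \<in> rels n \<alpha>' \<beta>' \<gamma>' \<and> P.F r = sc c r'"
    proof (cases rule: relsE)
      case (1 i) then show ?thesis using R1 rel1_in[of i n \<alpha>' \<beta>' \<gamma>'] by (intro exsc[of P.F r]) simp_all
    next
      case (2 i) then show ?thesis using R2 rel2_in[of i n \<alpha>' \<beta>' \<gamma>'] by (intro exsc[of P.F r]) simp_all
    qed
  next
    fix r' assume "r' \<in> rels n \<alpha>' \<beta>' \<gamma>'"
    then show "\<exists>c r. r \<in> rels n \<alpha> \<beta> \<gamma> \<and> c \<noteq> 0 \<and> P.F r = sc c r'"
    proof (cases rule: relsE)
      case (1 j)
      have c: "lam (pr n j) * lam j \<noteq> 0" using lp(1)[of j] lam 1(1) by simp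
      show ?thesis
      proof (rule exsc2[of P.F "rel1 n \<alpha> \<beta> \<gamma> j" "lam (pr n j) * lam j"])
        show "P.F (rel1 n \<alpha> \<beta> \<gamma> j) = sc (lam (pr n j) * lam j) r'" using R1[of j] 1 by simp
        show "rel1 n \<alpha> \<beta> \<gamma> j \<in> rels n \<alpha> \<beta> \<gamma>" using 1 by (simp add: rel1_in)
        show "lam (pr n j) * lam j \<noteq> 0" by (rule c)
      qed
    next
      case (2 j) then show ?thesis using R2[of j] lp[of j]
        by (intro exsc2[of P.F "rel2 n \<alpha> \<beta> \<gamma> j"]) (simp_all add: rel2_in)
    qed
  next
    fix i assume "i < n" then show "P.F (ev i) = ev i"
      by (simp add: ev_def P.F_bas)
  next
    fix i assume "i < n" then show "P.F (uv i) = sc (lam i) (uv i)"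
      by (simp add: uv_def P.F_bas)
  next
    fix i assume "i < n" then show "P.F (dv i) = dv i"
      by (simp add: dv_def P.F_bas)
  qed
  then show ?thesis unfolding \<alpha>'_def \<beta>'_def \<gamma>'_def .
qed



lemma L1: "i < n \<Longrightarrow> nx n (n - Suc i) = (n - i) mod n"
  by (simp add: nx_def Suc_diff_Suc)
lemma L2: "i < n \<Longrightarrow> (n - nx n i) mod n = n - Suc i"
proof -
  assume i: "i < n"
  show ?thesis
  proof (cases "Suc i = n")
    case True then show ?thesis by (simp add: nx_def)
  next
    case False then have "Suc i < n" using i by auto
    then show ?thesis by (simp add: nx_def)
  qed
qed
lemma L3: "(i::nat) < n \<Longrightarrow> (n - (n - i) mod n) mod n = i"
  by (cases "i = 0") auto
lemma L4: "i < n \<Longrightarrow> pr n (n - Suc i) = n - Suc (nx n i)"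
proof -
  assume i: "i < n"
  show ?thesis
  proof (cases "Suc i = n")
    case True then show ?thesis by (simp add: nx_def pr_def)
  next
    case False then have "Suc i < n" using i by auto
    have "pr n (n - Suc i) = (n - Suc (Suc i) + n) mod n"
      unfolding pr_def by (rule arg_cong[where f="\<lambda>x. x mod n"]) (use \<open>Suc i < n\<close> in arith)
    also have "\<dots> = n - Suc (Suc i)" by (subst mod_add_self2, rule mod_less) (use \<open>Suc i < n\<close> in arith)
    also have "\<dots> = n - Suc (nx n i)" using \<open>Suc i < n\<close> by (simp add: nx_def)
    finally show ?thesis .
  qed
qed
lemma L5: "i < n \<Longrightarrow> nx n (n - Suc i) = n - Suc (pr n i)"
  by (cases i) (auto simp: nx_def pr_def Suc_diff_Suc)
lemma L6: "i < n \<Longrightarrow> n - Suc (n - Suc i) = i" by simp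

definition sw :: "nat \<Rightarrow> arr \<Rightarrow> arr" where
  "sw n a = (case a of U i \<Rightarrow> if i < n then D (n - Suc i) else U i | D i \<Rightarrow> if i < n then U (n - Suc i) else D i)"

lemma sw_simps[simp]: "sw n (U i) = (if i < n then D (n - Suc i) else U i)"
  "sw n (D i) = (if i < n then U (n - Suc i) else D i)"
  by (simp_all add: sw_def)

abbreviation "tr n \<equiv> tm n (\<lambda>i. (n - i) mod n)"

lemma pm3: "0 < n \<Longrightarrow> pm n (sw n) (tr n) (sw n) (tr n) (\<lambda>_. 1::'a::field)"
  by (rule pmI) (auto simp: tm_def L1 L2 L3)

lemma case3:
  fixes \<alpha> \<beta> \<gamma> :: "nat \<Rightarrow> 'a::field"
  assumes "1 \<le> n" and bnz: "\<forall>i<n. \<beta> i \<noteq> 0"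
  shows "extends_to_iso n \<alpha> \<beta> \<gamma>
          (\<lambda>i. - inverse (\<beta> (n - i - 1)) * \<alpha> (n - i - 1))
          (\<lambda>i. inverse (\<beta> (n - i - 1)))
          (\<lambda>i. - inverse (\<beta> (n - i - 1)) * \<gamma> (n - i - 1))
          (\<lambda>i. ev ((n - i) mod n)) (\<lambda>i. dv (n - i - 1)) (\<lambda>i. uv (n - i - 1))"
proof -
  have n: "0 < n" using assms by simp
  interpret P: pm n "sw n" "tr n" "sw n" "tr n" "\<lambda>_. 1::'a" by (rule pm3[OF n])
  define \<alpha>' where "\<alpha>' = (\<lambda>i. - inverse (\<beta> (n - i - 1)) * \<alpha> (n - i - 1))"
  define \<beta>' where "\<beta>' = (\<lambda>i. inverse (\<beta> (n - i - 1)))"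
  define \<gamma>' where "\<gamma>' = (\<lambda>i. - inverse (\<beta> (n - i - 1)) * \<gamma> (n - i - 1))"
  have R1: "P.F (rel1 n \<alpha> \<beta> \<gamma> i) = sc (- \<beta> i) (rel2 n \<alpha>' \<beta>' \<gamma>' (n - Suc i))"
    if i: "i < n" for i
  proof -
    have b: "\<beta> i \<noteq> 0" using bnz i by simp
    show ?thesis
      unfolding rel1_def rel2_def P.F_rel \<alpha>'_def \<beta>'_def \<gamma>'_def sc_def
      by (rule ext) (simp add: i n b pw_one L4 L5 L6 field_simps)
  qed
  have R2: "P.F (rel2 n \<alpha> \<beta> \<gamma> i) = sc (- \<beta> i) (rel1 n \<alpha>' \<beta>' \<gamma>' (n - Suc i))"
    if i: "i < n" for i
  proof -
    have b: "\<beta> i \<noteq> 0" using bnz i by simp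
    show ?thesis
      unfolding rel1_def rel2_def P.F_rel \<alpha>'_def \<beta>'_def \<gamma>'_def sc_def
      by (rule ext) (simp add: i n b pw_one L4 L5 L6 field_simps)
  qed
  have "extends_to_iso n \<alpha> \<beta> \<gamma> \<alpha>' \<beta>' \<gamma>' (\<lambda>i. ev ((n - i) mod n)) (\<lambda>i. dv (n - i - 1)) (\<lambda>i. uv (n - i - 1))"
  proof (rule P.ext_iso)
    fix r assume "r \<in> rels n \<alpha> \<beta> \<gamma>"
    then show "\<exists>c r'. r' \<in> rels n \<alpha>' \<beta>' \<gamma>' \<and> P.F r = sc c r'"
    proof (cases rule: relsE)
      case (1 i)
      have m: "rel2 n \<alpha>' \<beta>' \<gamma>' (n - Suc i) \<in> rels n \<alpha>' \<beta>' \<gamma>'" using 1 by (intro rel2_in) simp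
      show ?thesis using R1[OF 1(1)] 1(2) m by (intro exsc[of P.F r]) simp_all
    next
      case (2 i)
      have m: "rel1 n \<alpha>' \<beta>' \<gamma>' (n - Suc i) \<in> rels n \<alpha>' \<beta>' \<gamma>'" using 2 by (intro rel1_in) simp
      show ?thesis using R2[OF 2(1)] 2(2) m by (intro exsc[of P.F r]) simp_all
    qed
  next
    fix r' assume "r' \<in> rels n \<alpha>' \<beta>' \<gamma>'"
    then show "\<exists>c r. r \<in> rels n \<alpha> \<beta> \<gamma> \<and> c \<noteq> 0 \<and> P.F r = sc c r'"
    proof (cases rule: relsE)
      case (1 j)
      have k: "n - Suc j < n" using n by simp
      have c: "- \<beta> (n - Suc j) \<noteq> 0" using bnz k by simp
      show ?thesis
      proof (rule exsc2[of P.F "rel2 n \<alpha> \<beta> \<gamma> (n - Suc j)" "- \<beta> (n - Suc j)"])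
        show "P.F (rel2 n \<alpha> \<beta> \<gamma> (n - Suc j)) = sc (- \<beta> (n - Suc j)) r'"
          using R2[OF k] 1 L6[of j n] by simp
        show "rel2 n \<alpha> \<beta> \<gamma> (n - Suc j) \<in> rels n \<alpha> \<beta> \<gamma>" using k by (rule rel2_in)
        show "- \<beta> (n - Suc j) \<noteq> 0" by (rule c)
      qed
    next
      case (2 j)
      have k: "n - Suc j < n" using n by simp
      have c: "- \<beta> (n - Suc j) \<noteq> 0" using bnz k by simp
      show ?thesis
      proof (rule exsc2[of P.F "rel1 n \<alpha> \<beta> \<gamma> (n - Suc j)" "- \<beta> (n - Suc j)"])
        show "P.F (rel1 n \<alpha> \<beta> \<gamma> (n - Suc j)) = sc (- \<beta> (n - Suc j)) r'"
          using R1[OF k] 2 L6[of j n] by simp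
        show "rel1 n \<alpha> \<beta> \<gamma> (n - Suc j) \<in> rels n \<alpha> \<beta> \<gamma>" using k by (rule rel1_in)
        show "- \<beta> (n - Suc j) \<noteq> 0" by (rule c)
      qed
    qed
  next
    fix i assume "i < n" then show "P.F (ev i) = ev ((n - i) mod n)"
      by (simp add: ev_def P.F_bas pw_one tm_def)
  next
    fix i assume "i < n" then show "P.F (uv i) = dv (n - i - 1)"
      by (simp add: uv_def dv_def P.F_bas pw_one)
  next
    fix i assume "i < n" then show "P.F (dv i) = uv (n - i - 1)"
      by (simp add: uv_def dv_def P.F_bas pw_one)
  qed
  then show ?thesis unfolding \<alpha>'_def \<beta>'_def \<gamma>'_def .
qed

theorem lemma5p1:
  fixes n :: nat and \<alpha> \<beta> \<gamma> :: "nat \<Rightarrow> 'a::{alg_closed_field, field_char_0}"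
  assumes "n \<ge> 1"
  shows
    "(\<forall>lam :: nat \<Rightarrow> 'a. (\<forall>i<n. lam i \<noteq> 0) \<longrightarrow>
        extends_to_iso n \<alpha> \<beta> \<gamma>
          (\<lambda>i. lam i * inverse (lam (pr n i)) * \<alpha> i)
          (\<lambda>i. lam (nx n i) * inverse (lam (pr n i)) * \<beta> i)
          (\<lambda>i. inverse (lam (pr n i)) * \<gamma> i)
          (\<lambda>i. ev i) (\<lambda>i. sc (lam i) (uv i)) (\<lambda>i. dv i))
   \<and> extends_to_iso n \<alpha> \<beta> \<gamma>
          (\<lambda>i. \<alpha> (pr n i)) (\<lambda>i. \<beta> (pr n i)) (\<lambda>i. \<gamma> (pr n i))
          (\<lambda>i. ev (nx n i)) (\<lambda>i. uv (nx n i)) (\<lambda>i. dv (nx n i))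
   \<and> ((\<forall>i<n. \<beta> i \<noteq> 0) \<longrightarrow>
        extends_to_iso n \<alpha> \<beta> \<gamma>
          (\<lambda>i. - inverse (\<beta> (n - i - 1)) * \<alpha> (n - i - 1))
          (\<lambda>i. inverse (\<beta> (n - i - 1)))
          (\<lambda>i. - inverse (\<beta> (n - i - 1)) * \<gamma> (n - i - 1))
          (\<lambda>i. ev ((n - i) mod n)) (\<lambda>i. dv (n - i - 1)) (\<lambda>i. uv (n - i - 1)))"
  using case1[OF assms] case2[OF assms] case3[OF assms] by blast

end
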